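(* For the redundancy-$d$ cancel-on-completion model described in the context, provided the normalising sum is finite, the stationary distribution of the token state descriptor is $$\pi((T_1,n_1,\dots,T_i,n_i))=\pi((0))\frac1{i!}\prod_{j=1}^i\Big(\frac{j\lambda}{\mu\binom Kd F_j(T_1,\dots,T_j)}\Big)^{n_j+1},$$ for all $i\in\{0,\dots,\binom Kd\}$, distinct $T_1,\dots,T_i$ and $n_j\in\mathbb N_0$.
   Context: Redundancy-$d$ COC model: $K$ homogeneous servers, each with its own FCFS queue, serving at exponential rate $\mu$. Customers arrive as a Poisson process with rate $\lambda$; each picks a uniformly random set of $d$ of the $K$ servers and sends a copy to each, copies having independent exponential($\mu$) service requirements; when any copy completes, all copies of that customer are removed. Customer types correspond to the $\binom Kd$ server subsets, each with arrival rate $\lambda/\binom Kd$. Token representation: one token per type, held by the oldest customer of that type present. State: $(0)$ or $(T_1,n_1,\dots,T_i,n_i)$ with $T_1,\dots,T_i$ distinct held tokens ordered by arrival of their holders and $n_j$ the number of non-holding customers arriving between holders of $T_j$ and $T_{j+1}$ (after the holder of $T_i$ for $j=i$). $F_j(T_1,\dots,T_j)$ denotes the number of servers in the union of the server sets of the types corresponding to $T_1,\dots,T_j$. *)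

theory Defs
  imports "HOL-Analysis.Analysis"
begin

definition stationary_dist :: "'s set \<Rightarrow> ('s \<Rightarrow> 's \<Rightarrow> real) \<Rightarrow> ('s \<Rightarrow> real) \<Rightarrow> bool" where
  "stationary_dist S q p \<longleftrightarrow>
     (\<forall>x\<in>S. 0 \<le> p x) \<and> (p has_sum 1) S \<and>
     (\<forall>x\<in>S. p x * (\<Sum>\<^sub>\<infinity>y\<in>S - {x}. q x y) = (\<Sum>\<^sub>\<infinity>y\<in>S - {x}. p y * q y x))"

definition ctypes :: "nat \<Rightarrow> nat \<Rightarrow> nat set set" where
  "ctypes K d = {T. T \<subseteq> {..<K} \<and> card T = d}"

text \<open>Detailed state: list of types of the customers present, in order of arrival
  (oldest first).\<close>

definition cstates :: "nat \<Rightarrow> nat \<Rightarrow> nat set list set" where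
  "cstates K d = {xs. set xs \<subseteq> ctypes K d}"

text \<open>Number of servers at which the k-th customer is in service (i.e. is the oldest
  customer in that server's FCFS queue).\<close>

definition nserving :: "nat set list \<Rightarrow> nat \<Rightarrow> nat" where
  "nserving xs k = card (xs ! k - \<Union> (set (take k xs)))"

definition del_at :: "nat \<Rightarrow> 'a list \<Rightarrow> 'a list" where
  "del_at k xs = take k xs @ drop (Suc k) xs"

definition coc_rate :: "nat \<Rightarrow> nat \<Rightarrow> real \<Rightarrow> real \<Rightarrow> nat set list \<Rightarrow> nat set list \<Rightarrow> real" where
  "coc_rate K d lam mu xs ys =
     (if \<exists>t\<in>ctypes K d. ys = xs @ [t] then lam / real (K choose d) else 0)
     + (\<Sum>k<length xs. if ys = del_at k xs then mu * real (nserving xs k) else 0)"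

text \<open>Token state (T_1,n_1,...,T_i,n_i) as a list of pairs; the empty list is state (0).
  A customer holds the token of its type iff it is the oldest customer of that type.\<close>

definition tok_step :: "(nat set \<times> nat) list \<Rightarrow> nat set \<Rightarrow> (nat set \<times> nat) list" where
  "tok_step ts t =
     (if t \<in> fst ` set ts
      then butlast ts @ [(fst (last ts), Suc (snd (last ts)))]
      else ts @ [(t, 0)])"

definition tok :: "nat set list \<Rightarrow> (nat set \<times> nat) list" where
  "tok xs = foldl tok_step [] xs"

definition tok_states :: "nat \<Rightarrow> nat \<Rightarrow> (nat set \<times> nat) list set" where
  "tok_states K d = {ts. distinct (map fst ts) \<and> set (map fst ts) \<subseteq> ctypes K d}"

definition Fj :: "nat \<Rightarrow> (nat set \<times> nat) list \<Rightarrow> nat" where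
  "Fj j ts = card (\<Union> (set (map fst (take j ts))))"

text \<open>Unnormalised product-form weight pi(s)/pi((0)).\<close>

definition tok_weight :: "nat \<Rightarrow> nat \<Rightarrow> real \<Rightarrow> real \<Rightarrow> (nat set \<times> nat) list \<Rightarrow> real" where
  "tok_weight K d lam mu ts =
     (1 / fact (length ts)) *
     (\<Prod>j\<in>{1..length ts}.
        (real j * lam / (mu * real (K choose d) * real (Fj j ts))) ^ (snd (ts ! (j - 1)) + 1))"

definition tok_marg :: "nat \<Rightarrow> nat \<Rightarrow> (nat set list \<Rightarrow> real) \<Rightarrow> (nat set \<times> nat) list \<Rightarrow> real" where
  "tok_marg K d p ts = (\<Sum>\<^sub>\<infinity>xs\<in>{xs\<in>cstates K d. tok xs = ts}. p xs)"

end

theory Submission imports Defs begin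

locale coc =
  fixes K d :: nat and lam mu :: real
  assumes d1: "1 \<le> d" and dK: "d \<le> K" and lam0: "0 < lam" and mu0: "0 < mu"
begin

abbreviation "types \<equiv> ctypes K d"
abbreviation "S \<equiv> cstates K d"
abbreviation "N \<equiv> K choose d"
definition "a = lam / real N"
abbreviation "q \<equiv> coc_rate K d lam mu"

definition U :: "nat set list \<Rightarrow> nat set" where "U xs = \<Union> (set xs)"
definition FF :: "nat set list \<Rightarrow> nat" where "FF xs = card (U xs)"
definition wt :: "nat set list \<Rightarrow> real" where
  "wt xs = (\<Prod>j<length xs. a / (mu * real (FF (take (Suc j) xs))))"
definition ins :: "nat \<Rightarrow> nat set \<Rightarrow> nat set list \<Rightarrow> nat set list" where
  "ins k t xs = take k xs @ t # drop k xs"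
definition L :: "nat \<Rightarrow> nat set list set" where "L n = {xs. set xs \<subseteq> types \<and> length xs = n}"
definition Lle :: "nat \<Rightarrow> nat set list set" where "Lle n = {xs. set xs \<subseteq> types \<and> length xs \<le> n}"

lemma finite_types: "finite types"
  unfolding ctypes_def by (rule finite_subset[of _ "Pow {..<K}"]) auto

lemma card_types: "card types = N"
  unfolding ctypes_def using n_subsets[of "{..<K}" d] by simp

lemma N_pos: "0 < N" using dK by simp

lemma a_pos: "0 < a" unfolding a_def using N_pos lam0 by simp

lemma type_props: "t \<in> types \<Longrightarrow> t \<subseteq> {..<K} \<and> card t = d \<and> finite t \<and> t \<noteq> {}"
  unfolding ctypes_def using d1 by (auto intro: finite_subset)

lemma finite_L: "finite (L n)" unfolding L_def by (rule finite_lists_length_eq[OF finite_types])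
lemma finite_Lle: "finite (Lle n)" unfolding Lle_def by (rule finite_lists_length_le[OF finite_types])

lemma S_iff: "xs \<in> S \<longleftrightarrow> set xs \<subseteq> types" unfolding cstates_def by simp

lemma U_sub: "xs \<in> S \<Longrightarrow> U xs \<subseteq> {..<K}"
  unfolding U_def S_iff using type_props by blast

lemma finite_U: "xs \<in> S \<Longrightarrow> finite (U xs)" using U_sub finite_subset by blast

lemma FF_le: "xs \<in> S \<Longrightarrow> FF xs \<le> K"
  unfolding FF_def using U_sub card_mono[of "{..<K}"] by fastforce

lemma FF_pos: "xs \<in> S \<Longrightarrow> xs \<noteq> [] \<Longrightarrow> 0 < FF xs"
proof -
  assume "xs \<in> S" "xs \<noteq> []"
  then obtain t where t: "t \<in> set xs" by (cases xs) auto
  then have "t \<in> types" using \<open>xs \<in> S\<close> S_iff by auto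
  then have "t \<noteq> {}" "t \<subseteq> U xs" using type_props t U_def by auto
  then show ?thesis unfolding FF_def using finite_U[OF \<open>xs \<in> S\<close>] by (auto simp: card_gt_0_iff)
qed

lemma U_snoc: "U (xs @ [c]) = U xs \<union> c" unfolding U_def by auto

lemma wt_Nil[simp]: "wt [] = 1" unfolding wt_def by simp

lemma wt_snoc: "wt (xs @ [c]) = wt xs * (a / (mu * real (FF (xs @ [c]))))"
proof -
  have "wt (xs @ [c]) = (\<Prod>j<Suc (length xs). a / (mu * real (FF (take (Suc j) (xs @ [c])))))"
    unfolding wt_def by simp
  also have "\<dots> = (\<Prod>j<length xs. a / (mu * real (FF (take (Suc j) (xs @ [c]))))) *
      (a / (mu * real (FF (xs @ [c]))))" by simp
  also have "(\<Prod>j<length xs. a / (mu * real (FF (take (Suc j) (xs @ [c]))))) = wt xs"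
    unfolding wt_def by (rule prod.cong) auto
  finally show ?thesis .
qed

lemma wt_pos: "xs \<in> S \<Longrightarrow> 0 < wt xs"
proof (induction xs rule: rev_induct)
  case Nil then show ?case by simp
next
  case (snoc c xs)
  then have "xs \<in> S" by (simp add: S_iff)
  have "0 < FF (xs @ [c])" using FF_pos snoc.prems by simp
  then show ?case using snoc.IH[OF \<open>xs \<in> S\<close>] wt_snoc a_pos mu0 by simp
qed

lemma ns_snoc_lt: "k < length xs \<Longrightarrow> nserving (xs @ [c]) k = nserving xs k"
  unfolding nserving_def by (simp add: nth_append)

lemma ns_snoc_last: "nserving (xs @ [c]) (length xs) = card (c - U xs)"
  unfolding nserving_def U_def by simp

lemma card_U_snoc: "xs \<in> S \<Longrightarrow> c \<in> types \<Longrightarrow> card (U xs \<union> c) = FF xs + card (c - U xs)"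
proof -
  assume "xs \<in> S" "c \<in> types"
  have "U xs \<union> c = U xs \<union> (c - U xs)" by auto
  moreover have "finite (c - U xs)" using type_props[OF \<open>c \<in> types\<close>] by auto
  moreover have "card (U xs \<union> (c - U xs)) = card (U xs) + card (c - U xs)"
    using finite_U[OF \<open>xs \<in> S\<close>] \<open>finite (c - U xs)\<close> by (intro card_Un_disjoint) auto
  ultimately show ?thesis unfolding FF_def by metis
qed

lemma sum_ns: "xs \<in> S \<Longrightarrow> (\<Sum>k<length xs. real (nserving xs k)) = real (FF xs)"
proof (induction xs rule: rev_induct)
  case Nil then show ?case by (simp add: FF_def U_def)
next
  case (snoc c xs)
  then have xs: "xs \<in> S" and c: "c \<in> types" by (auto simp: S_iff)
  have "(\<Sum>k<length (xs@[c]). real (nserving (xs@[c]) k)) =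
        (\<Sum>k<length xs. real (nserving (xs@[c]) k)) + real (nserving (xs@[c]) (length xs))" by simp
  also have "(\<Sum>k<length xs. real (nserving (xs@[c]) k)) = (\<Sum>k<length xs. real (nserving xs k))"
    by (rule sum.cong) (auto simp: ns_snoc_lt)
  finally show ?case using snoc.IH[OF xs] ns_snoc_last card_U_snoc[OF xs c]
    by (simp add: FF_def U_snoc)
qed


lemma set_ins: "set (ins k t x) = insert t (set x)"
  unfolding ins_def by (metis Un_insert_right append_take_drop_id list.simps(15) set_append)

lemma U_ins: "U (ins k t x) = U x \<union> t"
  unfolding U_def set_ins by auto

lemma length_ins: "k \<le> length x \<Longrightarrow> length (ins k t x) = Suc (length x)"
  unfolding ins_def by simp

lemma ins_snoc: "k \<le> length x \<Longrightarrow> ins k t (x @ [c]) = ins k t x @ [c]"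
  unfolding ins_def by simp

lemma ins_last: "ins (length x) t x = x @ [t]"
  unfolding ins_def by simp

lemma ins_S: "x \<in> S \<Longrightarrow> t \<in> types \<Longrightarrow> ins k t x \<in> S"
  unfolding S_iff set_ins by simp

lemma key_g:
  assumes "x \<in> S" "t \<in> types"
  shows "(\<Sum>k<Suc (length x). wt (ins k t x) * mu * real (nserving (ins k t x) k)) = a * wt x"
  using assms(1)
proof (induction x rule: rev_induct)
  case Nil
  have "nserving [t] 0 = d" unfolding nserving_def using type_props[OF assms(2)] by simp
  moreover have "FF [t] = d" unfolding FF_def U_def using type_props[OF assms(2)] by simp
  ultimately show ?case using mu0 d1 by (simp add: ins_def wt_def)
next
  case (snoc c x)
  then have x: "x \<in> S" and c: "c \<in> types" by (auto simp: S_iff)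
  let ?C = "real (card (U (x @ [c]) \<union> t))"
  have Cdec: "card (U (x @ [c]) \<union> t) = FF (x @ [c]) + card (t - U (x @ [c]))"
    using card_U_snoc[OF snoc.prems assms(2)] .
  have Fpos: "0 < FF (x @ [c])" using FF_pos snoc.prems by simp
  have "(\<Sum>k<Suc (length (x@[c])). wt (ins k t (x@[c])) * mu * real (nserving (ins k t (x@[c])) k))
     = (\<Sum>k<Suc (length x). wt (ins k t (x@[c])) * mu * real (nserving (ins k t (x@[c])) k))
       + wt (ins (Suc (length x)) t (x@[c])) * mu * real (nserving (ins (Suc (length x)) t (x@[c])) (Suc (length x)))"
    by simp
  also have "(\<Sum>k<Suc (length x). wt (ins k t (x@[c])) * mu * real (nserving (ins k t (x@[c])) k))
      = (\<Sum>k<Suc (length x). (a / (mu * ?C)) * (wt (ins k t x) * mu * real (nserving (ins k t x) k)))"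
  proof (rule sum.cong)
    fix k assume "k \<in> {..<Suc (length x)}"
    then have k: "k \<le> length x" by simp
    have "wt (ins k t (x@[c])) = wt (ins k t x) * (a / (mu * real (FF (ins k t x @ [c]))))"
      using ins_snoc[OF k] wt_snoc by simp
    moreover have "FF (ins k t x @ [c]) = card (U (x @ [c]) \<union> t)"
      unfolding FF_def U_snoc U_ins by (simp add: Un_ac)
    moreover have "nserving (ins k t (x@[c])) k = nserving (ins k t x) k"
      using k ins_snoc[OF k] ns_snoc_lt[of k "ins k t x" c] length_ins[OF k] by simp
    ultimately show "wt (ins k t (x@[c])) * mu * real (nserving (ins k t (x@[c])) k)
      = (a / (mu * ?C)) * (wt (ins k t x) * mu * real (nserving (ins k t x) k))" by simp
  qed simp
  also have "\<dots> = (a / (mu * ?C)) * (\<Sum>k<Suc (length x). wt (ins k t x) * mu * real (nserving (ins k t x) k))"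
    by (rule sum_distrib_left[symmetric])
  also have "\<dots> = (a / (mu * ?C)) * (a * wt x)"
    by (simp only: snoc.IH[OF x])
  also have "ins (Suc (length x)) t (x@[c]) = (x @ [c]) @ [t]"
    using ins_last[of "x@[c]" t] by simp
  also have "wt ((x @ [c]) @ [t]) = wt (x@[c]) * (a / (mu * ?C))"
    by (simp only: wt_snoc[of "x@[c]" t] FF_def U_snoc[of "x@[c]" t])
  also have "nserving ((x @ [c]) @ [t]) (Suc (length x)) = card (t - U (x @ [c]))"
    using ns_snoc_last[of "x@[c]" t] by simp
  also have "a * wt x = wt (x@[c]) * mu * real (FF (x @ [c]))"
    using wt_snoc[of x c] Fpos mu0 a_pos by (simp add: field_simps)
  finally have eq: "(\<Sum>k<Suc (length (x@[c])). wt (ins k t (x@[c])) * mu * real (nserving (ins k t (x@[c])) k))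
    = (a / (mu * ?C)) * (wt (x@[c]) * mu * real (FF (x @ [c]))) + wt (x@[c]) * (a / (mu * ?C)) * mu * real (card (t - U (x @ [c])))" .
  have C: "?C = real (FF (x @ [c])) + real (card (t - U (x @ [c])))" using Cdec by simp
  have Cpos: "?C > 0" using C Fpos by simp
  have "(a / (mu * ?C)) * (wt (x@[c]) * mu * real (FF (x @ [c]))) + wt (x@[c]) * (a / (mu * ?C)) * mu * real (card (t - U (x @ [c])))
     = a * wt (x@[c]) * (real (FF (x @ [c])) + real (card (t - U (x @ [c])))) / ?C"
    using mu0 Cpos by (simp add: field_simps)
  also have "\<dots> = a * wt (x@[c])" using C Cpos by simp
  finally show ?case using eq by simp
qed


definition arr :: "nat set list \<Rightarrow> nat set list \<Rightarrow> real" where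
  "arr y x = (if \<exists>t\<in>types. x = y @ [t] then lam / real N else 0)"
definition dep :: "nat set list \<Rightarrow> nat set list \<Rightarrow> real" where
  "dep y x = (\<Sum>k<length y. if x = del_at k y then mu * real (nserving y k) else 0)"

lemma q_eq: "q y x = arr y x + dep y x"
  unfolding coc_rate_def arr_def dep_def by simp

lemma length_del_at: "k < length y \<Longrightarrow> length (del_at k y) = length y - 1"
  unfolding del_at_def by simp

lemma set_del_at: "set (del_at k y) \<subseteq> set y"
  unfolding del_at_def by (auto dest: in_set_takeD in_set_dropD)

lemma arr_nonneg: "0 \<le> arr y x" unfolding arr_def using lam0 by simp
lemma dep_nonneg: "0 \<le> dep y x" unfolding dep_def using mu0 by (auto intro!: sum_nonneg)
lemma q_nonneg: "0 \<le> q y x" using q_eq arr_nonneg dep_nonneg by simp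

lemma arr_supp: "arr y x \<noteq> 0 \<Longrightarrow> length x = Suc (length y)"
  unfolding arr_def by (auto split: if_splits)

lemma dep_supp: "dep y x \<noteq> 0 \<Longrightarrow> length y = Suc (length x)"
proof -
  assume "dep y x \<noteq> 0"
  have "\<exists>k<length y. x = del_at k y"
  proof (rule ccontr)
    assume "\<not> (\<exists>k<length y. x = del_at k y)"
    then have "dep y x = 0" unfolding dep_def by (intro sum.neutral) auto
    then show False using \<open>dep y x \<noteq> 0\<close> by simp
  qed
  then obtain k where "k < length y" "x = del_at k y" by blast
  then show ?thesis using length_del_at[of k y] by simp
qed

lemma q_self: "q x x = 0"
proof -
  have "arr x x = 0" using arr_supp by fastforce
  moreover have "dep x x = 0" using dep_supp by fastforce
  ultimately show ?thesis using q_eq by simp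
qed

lemma q_supp: "q y x \<noteq> 0 \<Longrightarrow> length y \<le> Suc (length x)"
proof -
  assume "q y x \<noteq> 0"
  then have "arr y x \<noteq> 0 \<or> dep y x \<noteq> 0" using q_eq by auto
  then show ?thesis
  proof
    assume "arr y x \<noteq> 0" then show ?thesis using arr_supp[of y x] by simp
  next
    assume "dep y x \<noteq> 0" then show ?thesis using dep_supp[of y x] by simp
  qed
qed

lemma Lle_sub_S: "Lle n \<subseteq> S" by (auto simp: Lle_def S_iff)
lemma L_sub_Lle: "m \<le> n \<Longrightarrow> L m \<subseteq> Lle n" unfolding Lle_def L_def by auto

lemma arr_out:
  assumes "y \<in> S"
  shows "(\<Sum>x\<in>Lle n. arr y x) = (if length y < n then lam else 0)"
proof -
  have "(\<Sum>x\<in>Lle n. arr y x) = (\<Sum>x\<in>{x\<in>Lle n. \<exists>t\<in>types. x = y @ [t]}. lam / real N)"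
    unfolding arr_def by (rule sum.inter_filter[OF finite_Lle, symmetric])
  also have "{x\<in>Lle n. \<exists>t\<in>types. x = y @ [t]} = (if length y < n then (\<lambda>t. y @ [t]) ` types else {})"
    using assms unfolding Lle_def S_iff by auto
  also have "(\<Sum>x\<in>(if length y < n then (\<lambda>t. y @ [t]) ` types else {}). lam / real N)
      = (if length y < n then lam else 0)"
  proof (cases "length y < n")
    case True
    have "card ((\<lambda>t. y @ [t]) ` types) = N"
      using card_image[of "\<lambda>t. y @ [t]" types] card_types by (simp add: inj_on_def)
    then show ?thesis using True N_pos by simp
  qed simp
  finally show ?thesis .
qed

lemma dep_out:
  assumes "y \<in> S"
  shows "(\<Sum>x\<in>Lle n. dep y x) = (if length y \<le> Suc n then mu * real (FF y) else 0)"
proof -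
  have "(\<Sum>x\<in>Lle n. dep y x) = (\<Sum>k<length y. \<Sum>x\<in>Lle n. if x = del_at k y then mu * real (nserving y k) else 0)"
    unfolding dep_def by (rule sum.swap)
  also have "\<dots> = (\<Sum>k<length y. if del_at k y \<in> Lle n then mu * real (nserving y k) else 0)"
    by (simp add: sum.delta[OF finite_Lle])
  also have "\<dots> = (if length y \<le> Suc n then mu * real (FF y) else 0)"
  proof (cases "length y \<le> Suc n")
    case True
    have "\<And>k. k < length y \<Longrightarrow> del_at k y \<in> Lle n"
      using True assms set_del_at length_del_at unfolding Lle_def S_iff by fastforce
    then have "(\<Sum>k<length y. if del_at k y \<in> Lle n then mu * real (nserving y k) else 0)
        = (\<Sum>k<length y. mu * real (nserving y k))" by (intro sum.cong) auto
    also have "\<dots> = mu * real (FF y)" using sum_ns[OF assms] by (simp add: sum_distrib_left[symmetric])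
    finally show ?thesis using True by simp
  next
    case False
    have "\<And>k. k < length y \<Longrightarrow> del_at k y \<notin> Lle n"
      using False length_del_at unfolding Lle_def by fastforce
    then show ?thesis using False by simp
  qed
  finally show ?thesis .
qed

lemma q_out_le:
  assumes "y \<in> S"
  shows "(\<Sum>x\<in>Lle n. q y x) = (if length y < n then lam else 0) + (if length y \<le> Suc n then mu * real (FF y) else 0)"
  using arr_out[OF assms] dep_out[OF assms] by (simp add: q_eq sum.distrib)

lemma qout:
  assumes "y \<in> S"
  shows "(\<Sum>\<^sub>\<infinity>x\<in>S - {y}. q y x) = lam + mu * real (FF y)"
proof -
  have "(\<Sum>\<^sub>\<infinity>x\<in>S - {y}. q y x) = (\<Sum>\<^sub>\<infinity>x\<in>Lle (Suc (length y)). q y x)"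
  proof (rule infsum_cong_neutral)
    fix x assume "x \<in> Lle (Suc (length y)) - (S - {y})"
    then have "x = y" using Lle_sub_S by auto
    then show "q y x = 0" using q_self by simp
  next
    fix x assume x: "x \<in> S - {y} - Lle (Suc (length y))"
    show "q y x = 0"
    proof (rule ccontr)
      assume "q y x \<noteq> 0"
      then have "arr y x \<noteq> 0 \<or> dep y x \<noteq> 0" using q_eq by auto
      then have "length x \<le> Suc (length y)" using arr_supp[of y x] dep_supp[of y x] by auto
      then show False using x by (auto simp: Lle_def S_iff)
    qed
  qed simp
  also have "\<dots> = (\<Sum>x\<in>Lle (Suc (length y)). q y x)" using finite_Lle by simp
  finally show ?thesis using q_out_le[OF assms] by simp
qed


lemma del_ins: "k \<le> length x \<Longrightarrow> del_at k (ins k t x) = x"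
  unfolding del_at_def ins_def by simp

lemma ins_nth: "k \<le> length x \<Longrightarrow> ins k t x ! k = t"
  unfolding ins_def by (simp add: nth_append)

lemma fiber_del:
  assumes "x \<in> S" "k \<le> length x"
  shows "{y\<in>L (Suc (length x)). x = del_at k y} = (\<lambda>t. ins k t x) ` types"
proof (intro equalityI subsetI)
  fix y assume "y \<in> {y\<in>L (Suc (length x)). x = del_at k y}"
  then have y: "set y \<subseteq> types" "length y = Suc (length x)" "x = del_at k y" unfolding L_def by auto
  then have "k < length y" using assms by simp
  have tk: "take k (del_at k y) = take k y" unfolding del_at_def using \<open>k < length y\<close> by simp
  have dk: "drop k (del_at k y) = drop (Suc k) y" unfolding del_at_def using \<open>k < length y\<close> by simp
  have "ins k (y ! k) x = take k y @ y ! k # drop (Suc k) y" unfolding ins_def y(3) tk dk ..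
  also have "\<dots> = y" using id_take_nth_drop[OF \<open>k < length y\<close>] by simp
  finally have "y = ins k (y ! k) x" by simp
  moreover have "y ! k \<in> types" using y \<open>k < length y\<close> nth_mem by blast
  ultimately show "y \<in> (\<lambda>t. ins k t x) ` types" by blast
next
  fix y assume "y \<in> (\<lambda>t. ins k t x) ` types"
  then obtain t where t: "t \<in> types" "y = ins k t x" by blast
  have "set y \<subseteq> types" using ins_S[OF assms(1) t(1)] t(2) S_iff by simp
  moreover have "length y = Suc (length x)" using t(2) length_ins[OF assms(2)] by simp
  moreover have "x = del_at k y" using t(2) del_ins[OF assms(2)] by simp
  ultimately show "y \<in> {y\<in>L (Suc (length x)). x = del_at k y}" unfolding L_def by simp
qed

lemma inflow:
  assumes "x \<in> S"
  shows "(\<Sum>y\<in>Lle (Suc (length x)). f y * q y x) =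
    (if x = [] then 0 else f (butlast x) * a) +
    (\<Sum>k<Suc (length x). \<Sum>t\<in>types. f (ins k t x) * (mu * real (nserving (ins k t x) k)))"
proof -
  have A: "(\<Sum>y\<in>Lle (Suc (length x)). f y * arr y x) = (if x = [] then 0 else f (butlast x) * a)"
  proof -
    have "(\<Sum>y\<in>Lle (Suc (length x)). f y * arr y x) =
        (\<Sum>y\<in>Lle (Suc (length x)). if \<exists>t\<in>types. x = y @ [t] then f y * a else 0)"
      unfolding arr_def a_def by (intro sum.cong) auto
    also have "\<dots> = (\<Sum>y\<in>{y\<in>Lle (Suc (length x)). \<exists>t\<in>types. x = y @ [t]}. f y * a)"
      by (rule sum.inter_filter[OF finite_Lle, symmetric])
    also have "{y\<in>Lle (Suc (length x)). \<exists>t\<in>types. x = y @ [t]} = (if x = [] then {} else {butlast x})"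
    proof (cases "x = []")
      case False
      then have xe: "x = butlast x @ [last x]" by simp
      moreover have "last x \<in> types" using False assms S_iff last_in_set by blast
      ultimately have ex: "\<exists>t\<in>types. x = butlast x @ [t]" by blast
      have bl: "butlast x \<in> Lle (Suc (length x))" using assms
        by (auto simp: Lle_def S_iff dest: in_set_butlastD)
      have "{y\<in>Lle (Suc (length x)). \<exists>t\<in>types. x = y @ [t]} = {butlast x}"
      proof (intro equalityI subsetI)
        fix y assume "y \<in> {y\<in>Lle (Suc (length x)). \<exists>t\<in>types. x = y @ [t]}"
        then obtain t where "x = y @ [t]" by blast
        then show "y \<in> {butlast x}" by simp
      next
        fix y assume "y \<in> {butlast x}"
        then show "y \<in> {y\<in>Lle (Suc (length x)). \<exists>t\<in>types. x = y @ [t]}" using ex bl by simp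
      qed
      then show ?thesis using False by simp
    qed simp
    finally show ?thesis by simp
  qed
  have D: "(\<Sum>y\<in>Lle (Suc (length x)). f y * dep y x) =
    (\<Sum>k<Suc (length x). \<Sum>t\<in>types. f (ins k t x) * (mu * real (nserving (ins k t x) k)))"
  proof -
    have "(\<Sum>y\<in>Lle (Suc (length x)). f y * dep y x) = (\<Sum>y\<in>L (Suc (length x)). f y * dep y x)"
    proof (rule sum.mono_neutral_right[OF finite_Lle L_sub_Lle])
      show "\<forall>y\<in>Lle (Suc (length x)) - L (Suc (length x)). f y * dep y x = 0"
      proof
        fix y assume "y \<in> Lle (Suc (length x)) - L (Suc (length x))"
        then have "length y \<noteq> Suc (length x)" by (auto simp: Lle_def L_def)
        then have "dep y x = 0" using dep_supp by blast
        then show "f y * dep y x = 0" by simp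
      qed
    qed simp
    also have "\<dots> = (\<Sum>y\<in>L (Suc (length x)). \<Sum>k<Suc (length x).
        if x = del_at k y then f y * (mu * real (nserving y k)) else 0)"
      unfolding dep_def sum_distrib_left by (intro sum.cong) (auto simp: L_def)
    also have "\<dots> = (\<Sum>k<Suc (length x). \<Sum>y\<in>L (Suc (length x)).
        if x = del_at k y then f y * (mu * real (nserving y k)) else 0)"
      by (rule sum.swap)
    also have "\<dots> = (\<Sum>k<Suc (length x). \<Sum>y\<in>{y\<in>L (Suc (length x)). x = del_at k y}.
        f y * (mu * real (nserving y k)))"
      by (intro sum.cong refl sum.inter_filter[OF finite_L, symmetric])
    also have "\<dots> = (\<Sum>k<Suc (length x). \<Sum>t\<in>types. f (ins k t x) * (mu * real (nserving (ins k t x) k)))"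
    proof (rule sum.cong[OF refl])
      fix k assume "k \<in> {..<Suc (length x)}"
      then have k: "k \<le> length x" by simp
      have inj: "inj_on (\<lambda>t. ins k t x) types"
        using ins_nth[OF k] by (metis inj_onI)
      show "(\<Sum>y\<in>{y\<in>L (Suc (length x)). x = del_at k y}. f y * (mu * real (nserving y k))) =
          (\<Sum>t\<in>types. f (ins k t x) * (mu * real (nserving (ins k t x) k)))"
        unfolding fiber_del[OF assms k] by (simp add: sum.reindex[OF inj])
    qed
    finally show ?thesis .
  qed
  show ?thesis using A D by (simp add: q_eq distrib_left sum.distrib)
qed

lemma wt_balance:
  assumes "x \<in> S"
  shows "(\<Sum>y\<in>Lle (Suc (length x)). wt y * q y x) = wt x * (lam + mu * real (FF x))"
proof -
  have A: "(if x = [] then 0 else wt (butlast x) * a) = wt x * mu * real (FF x)"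
  proof (cases "x = []")
    case True then show ?thesis by (simp add: FF_def U_def)
  next
    case False
    then have "x = butlast x @ [last x]" by simp
    then have "wt x = wt (butlast x) * (a / (mu * real (FF x)))" using wt_snoc by metis
    moreover have "0 < FF x" using FF_pos assms False by simp
    ultimately show ?thesis using False mu0 by simp
  qed
  have "(\<Sum>k<Suc (length x). \<Sum>t\<in>types. wt (ins k t x) * (mu * real (nserving (ins k t x) k)))
      = (\<Sum>t\<in>types. \<Sum>k<Suc (length x). wt (ins k t x) * mu * real (nserving (ins k t x) k))"
    by (subst sum.swap) (simp add: mult.assoc)
  also have "\<dots> = (\<Sum>t\<in>types. a * wt x)" using key_g[OF assms] by simp
  also have "\<dots> = lam * wt x" using card_types N_pos by (simp add: a_def)
  finally show ?thesis using inflow[OF assms, of wt] A by (simp add: algebra_simps)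
qed


lemma infl_conv:
  assumes "x \<in> S"
  shows "(\<Sum>\<^sub>\<infinity>y\<in>S - {x}. f y * q y x) = (\<Sum>y\<in>Lle (Suc (length x)). f y * q y x)"
proof -
  have "(\<Sum>\<^sub>\<infinity>y\<in>S - {x}. f y * q y x) = (\<Sum>\<^sub>\<infinity>y\<in>Lle (Suc (length x)). f y * q y x)"
  proof (rule infsum_cong_neutral)
    fix y assume "y \<in> Lle (Suc (length x)) - (S - {x})"
    then have "y = x" using Lle_sub_S by auto
    then show "f y * q y x = 0" using q_self by simp
  next
    fix y assume y: "y \<in> S - {x} - Lle (Suc (length x))"
    then have "\<not> length y \<le> Suc (length x)" by (auto simp: Lle_def S_iff)
    then have "q y x = 0" using q_supp by blast
    then show "f y * q y x = 0" by simp
  qed simp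
  then show ?thesis using finite_Lle by simp
qed

lemma infl_mono:
  assumes "length x \<le> n"
  shows "(\<Sum>y\<in>Lle (Suc n). f y * q y x) = (\<Sum>y\<in>Lle (Suc (length x)). f y * q y x)"
proof (rule sum.mono_neutral_right[OF finite_Lle])
  show "Lle (Suc (length x)) \<subseteq> Lle (Suc n)" using assms by (auto simp: Lle_def)
  show "\<forall>y\<in>Lle (Suc n) - Lle (Suc (length x)). f y * q y x = 0"
  proof
    fix y assume "y \<in> Lle (Suc n) - Lle (Suc (length x))"
    then have "\<not> length y \<le> Suc (length x)" by (auto simp: Lle_def)
    then show "f y * q y x = 0" using q_supp by auto
  qed
qed

subsection \<open>Tokens\<close>

lemma tok_Nil[simp]: "tok [] = []" unfolding tok_def by simp
lemma tok_snoc: "tok (xs @ [t]) = tok_step (tok xs) t" unfolding tok_def by simp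
lemma tok_step_ne: "tok_step s t \<noteq> []" unfolding tok_step_def by simp

lemma tok_Nil_iff: "tok xs = [] \<longleftrightarrow> xs = []"
  by (cases xs rule: rev_cases) (auto simp: tok_snoc tok_step_ne)

lemma fst_tok_step: "fst ` set (tok_step s t) = insert t (fst ` set s)"
proof (cases "t \<in> fst ` set s")
  case True
  then have ne: "s \<noteq> []" by auto
  have "fst ` set (tok_step s t) = fst ` set (butlast s) \<union> {fst (last s)}"
    using True unfolding tok_step_def by auto
  also have "\<dots> = fst ` set (butlast s @ [last s])" by auto
  also have "\<dots> = fst ` set s" using ne by simp
  finally show ?thesis using True by auto
qed (auto simp: tok_step_def)

lemma distinct_tok_step: "distinct (map fst s) \<Longrightarrow> distinct (map fst (tok_step s t))"
proof (cases "t \<in> fst ` set s")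
  case True
  assume d: "distinct (map fst s)"
  then have ne: "s \<noteq> []" using True by auto
  have "map fst (tok_step s t) = map fst (butlast s @ [last s])"
    using True unfolding tok_step_def by simp
  then show ?thesis using ne d by simp
qed (auto simp: tok_step_def)

lemma U_tok: "U xs = \<Union> (fst ` set (tok xs))"
  by (induction xs rule: rev_induct) (auto simp: U_def tok_snoc fst_tok_step)

lemma tok_states_iff: "ts \<in> tok_states K d \<longleftrightarrow> distinct (map fst ts) \<and> fst ` set ts \<subseteq> types"
  unfolding tok_states_def by simp

lemma fst_tok: "fst ` set (tok xs) = set xs"
  by (induction xs rule: rev_induct) (auto simp: tok_snoc fst_tok_step)

lemma tok_in: "xs \<in> S \<Longrightarrow> tok xs \<in> tok_states K d"
proof -
  assume "xs \<in> S"
  moreover have "distinct (map fst (tok xs))"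
    by (induction xs rule: rev_induct) (auto simp: tok_snoc intro: distinct_tok_step)
  ultimately show ?thesis unfolding tok_states_iff fst_tok S_iff by simp
qed

definition Fib :: "(nat set \<times> nat) list \<Rightarrow> nat set list set" where
  "Fib ts = {xs \<in> S. tok xs = ts}"

lemma Fib_Nil: "Fib [] = {[]}"
  unfolding Fib_def by (auto simp: tok_Nil_iff S_iff)

lemma tok_step_app_in:
  assumes "t \<in> fst ` set s"
  shows "tok_step s t = ts' @ [(T, m)] \<longleftrightarrow> (\<exists>m'. m = Suc m' \<and> s = ts' @ [(T, m')])"
proof -
  have ne: "s \<noteq> []" using assms by auto
  have e: "tok_step s t = butlast s @ [(fst (last s), Suc (snd (last s)))]"
    using assms unfolding tok_step_def by simp
  show ?thesis
  proof
    assume "tok_step s t = ts' @ [(T, m)]"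
    then have "butlast s = ts'" "fst (last s) = T" "m = Suc (snd (last s))" using e by auto
    moreover have "s = butlast s @ [(fst (last s), snd (last s))]" using ne by simp
    ultimately show "\<exists>m'. m = Suc m' \<and> s = ts' @ [(T, m')]" by metis
  next
    assume "\<exists>m'. m = Suc m' \<and> s = ts' @ [(T, m')]"
    then show "tok_step s t = ts' @ [(T, m)]" using e by auto
  qed
qed

lemma tok_step_app_notin:
  assumes "t \<notin> fst ` set s"
  shows "tok_step s t = ts' @ [(T, m)] \<longleftrightarrow> s = ts' \<and> t = T \<and> m = 0"
  using assms unfolding tok_step_def by auto

lemma Fib_new:
  assumes "ts' @ [(T, 0)] \<in> tok_states K d"
  shows "Fib (ts' @ [(T, 0)]) = (\<lambda>xs. xs @ [T]) ` Fib ts'"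
proof (intro equalityI subsetI)
  fix xs assume xs: "xs \<in> Fib (ts' @ [(T, 0)])"
  then have "xs \<noteq> []" unfolding Fib_def by auto
  then obtain ys t where e: "xs = ys @ [t]" by (cases xs rule: rev_cases) auto
  have ys: "ys \<in> S" using xs e unfolding Fib_def S_iff by auto
  have st: "tok_step (tok ys) t = ts' @ [(T, 0)]" using xs e unfolding Fib_def by (simp add: tok_snoc)
  have "t \<notin> fst ` set (tok ys)" using st tok_step_app_in by blast
  then have "tok ys = ts' \<and> t = T" using st tok_step_app_notin by blast
  then show "xs \<in> (\<lambda>xs. xs @ [T]) ` Fib ts'" using e ys unfolding Fib_def by auto
next
  fix xs assume "xs \<in> (\<lambda>xs. xs @ [T]) ` Fib ts'"
  then obtain ys where ys: "ys \<in> Fib ts'" "xs = ys @ [T]" by blast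
  have "T \<notin> fst ` set ts'" "T \<in> types" using assms unfolding tok_states_iff by auto
  then have "tok xs = ts' @ [(T, 0)]" using ys unfolding Fib_def by (simp add: tok_snoc tok_step_def)
  moreover have "xs \<in> S" using ys \<open>T \<in> types\<close> unfolding Fib_def S_iff by auto
  ultimately show "xs \<in> Fib (ts' @ [(T, 0)])" unfolding Fib_def by simp
qed

lemma Fib_inc:
  assumes "ts' @ [(T, m)] \<in> tok_states K d"
  shows "Fib (ts' @ [(T, Suc m)]) =
    (\<lambda>(xs, t). xs @ [t]) ` (Fib (ts' @ [(T, m)]) \<times> fst ` set (ts' @ [(T, m)]))"
proof (intro equalityI subsetI)
  fix xs assume xs: "xs \<in> Fib (ts' @ [(T, Suc m)])"
  then have "xs \<noteq> []" unfolding Fib_def by auto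
  then obtain ys t where e: "xs = ys @ [t]" by (cases xs rule: rev_cases) auto
  have ys: "ys \<in> S" using xs e unfolding Fib_def S_iff by auto
  have st: "tok_step (tok ys) t = ts' @ [(T, Suc m)]" using xs e unfolding Fib_def by (simp add: tok_snoc)
  have tin: "t \<in> fst ` set (tok ys)" using st tok_step_app_notin by blast
  then have "tok ys = ts' @ [(T, m)]" using st tok_step_app_in by blast
  then have "(ys, t) \<in> Fib (ts' @ [(T, m)]) \<times> fst ` set (ts' @ [(T, m)])"
    using ys tin unfolding Fib_def by simp
  then show "xs \<in> (\<lambda>(xs, t). xs @ [t]) ` (Fib (ts' @ [(T, m)]) \<times> fst ` set (ts' @ [(T, m)]))"
    using e by (intro image_eqI[of _ _ "(ys, t)"]) auto
next
  fix xs assume "xs \<in> (\<lambda>(xs, t). xs @ [t]) ` (Fib (ts' @ [(T, m)]) \<times> fst ` set (ts' @ [(T, m)]))"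
  then obtain p where p: "p \<in> Fib (ts' @ [(T, m)]) \<times> fst ` set (ts' @ [(T, m)])" "xs = (\<lambda>(xs, t). xs @ [t]) p"
    by (rule imageE)
  obtain ys t where "p = (ys, t)" by (cases p)
  then have ys: "ys \<in> Fib (ts' @ [(T, m)])" "t \<in> fst ` set (ts' @ [(T, m)])" "xs = ys @ [t]"
    using p by auto
  have "t \<in> types" using assms ys(2) unfolding tok_states_iff by auto
  have "tok ys = ts' @ [(T, m)]" using ys unfolding Fib_def by simp
  then have "tok xs = ts' @ [(T, Suc m)]" using ys(2,3) tok_step_app_in[of t "ts' @ [(T, m)]"]
    by (simp add: tok_snoc)
  moreover have "xs \<in> S" using ys \<open>t \<in> types\<close> unfolding Fib_def S_iff by auto
  ultimately show "xs \<in> Fib (ts' @ [(T, Suc m)])" unfolding Fib_def by simp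
qed


definition G :: "(nat set \<times> nat) list \<Rightarrow> nat" where "G ts = card (\<Union> (fst ` set ts))"

abbreviation "tw \<equiv> tok_weight K d lam mu"

lemma Fj_len: "Fj (length ts) ts = G ts"
  unfolding Fj_def G_def by simp

lemma Fj_app: "j \<le> length ts \<Longrightarrow> Fj j (ts @ x) = Fj j ts"
  unfolding Fj_def by simp

lemma tw_snoc:
  "tw (ts @ [(T, m)]) = tw ts / real (Suc (length ts)) *
     (real (Suc (length ts)) * lam / (mu * real N * real (G (ts @ [(T, m)])))) ^ Suc m"
proof -
  let ?l = "length ts"
  let ?f = "\<lambda>j. (real j * lam / (mu * real N * real (Fj j (ts @ [(T, m)])))) ^ (snd ((ts @ [(T, m)]) ! (j - 1)) + 1)"
  have "(\<Prod>j\<in>{1..Suc ?l}. ?f j) = (\<Prod>j\<in>{1..?l}. ?f j) * ?f (Suc ?l)" by simp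
  also have "(\<Prod>j\<in>{1..?l}. ?f j) = (\<Prod>j\<in>{1..?l}. (real j * lam / (mu * real N * real (Fj j ts))) ^ (snd (ts ! (j - 1)) + 1))"
    by (intro prod.cong refl) (auto simp: Fj_app nth_append)
  also have "?f (Suc ?l) = (real (Suc ?l) * lam / (mu * real N * real (G (ts @ [(T, m)])))) ^ Suc m"
    using Fj_len[of "ts @ [(T, m)]"] by (simp add: nth_append)
  finally have P: "(\<Prod>j\<in>{1..Suc ?l}. ?f j) = (\<Prod>j\<in>{1..?l}. (real j * lam / (mu * real N * real (Fj j ts))) ^ (snd (ts ! (j - 1)) + 1))
     * (real (Suc ?l) * lam / (mu * real N * real (G (ts @ [(T, m)])))) ^ Suc m" .
  show ?thesis unfolding tok_weight_def length_append_singleton P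
    by (simp add: field_simps)
qed

lemma aux_cancel: "(r::real) \<noteq> 0 \<Longrightarrow> z \<noteq> 0 \<Longrightarrow> x / r * (r * y / z) = x * (y / z)"
  by (simp add: field_simps)

lemma aux_cancel2: "(r::real) \<noteq> 0 \<Longrightarrow> z \<noteq> 0 \<Longrightarrow> x / r * (r * y / z) ^ Suc n * (r * y / z) = x / r * (r * y / z) ^ Suc (Suc n)"
  by simp

lemma G_pos:
  assumes "ts \<in> tok_states K d" "(T, m) \<in> set ts"
  shows "0 < G ts"
proof -
  have sub: "fst ` set ts \<subseteq> types" using assms(1) unfolding tok_states_iff by simp
  then have fin: "finite (\<Union> (fst ` set ts))" using type_props by auto
  have "T \<in> types" using sub assms(2) by force
  then have "T \<noteq> {}" "T \<subseteq> \<Union> (fst ` set ts)" using type_props assms(2) by force+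
  then show ?thesis unfolding G_def using fin by (auto simp: card_gt_0_iff)
qed

lemma FF_fib: "xs \<in> Fib ts \<Longrightarrow> FF xs = G ts"
  unfolding Fib_def FF_def G_def using U_tok by simp

lemma fib_sum: "ts \<in> tok_states K d \<Longrightarrow> finite (Fib ts) \<and> sum wt (Fib ts) = tw ts"
proof (induction ts rule: rev_induct)
  case Nil
  then show ?case by (simp add: Fib_Nil tok_weight_def)
next
  case (snoc p ts')
  obtain T m0 where p: "p = (T, m0)" by (cases p)
  have ts': "ts' \<in> tok_states K d" using snoc.prems unfolding tok_states_iff by auto
  have IH: "finite (Fib ts')" "sum wt (Fib ts') = tw ts'" using snoc.IH[OF ts'] by auto
  let ?l = "length ts'"
  have Gm: "\<And>m. G (ts' @ [(T, m)]) = G (ts' @ [(T, 0)])" unfolding G_def by simp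
  have "\<And>m. ts' @ [(T, m)] \<in> tok_states K d" using snoc.prems p unfolding tok_states_iff by auto
  have "finite (Fib (ts' @ [(T, m)])) \<and> sum wt (Fib (ts' @ [(T, m)])) = tw (ts' @ [(T, m)])" for m
  proof (induction m)
    case 0
    have st: "ts' @ [(T, 0)] \<in> tok_states K d" by fact
    have inj: "inj_on (\<lambda>xs. xs @ [T]) (Fib ts')" by (auto simp: inj_on_def)
    have "sum wt (Fib (ts' @ [(T, 0)])) = (\<Sum>xs\<in>Fib ts'. wt (xs @ [T]))"
      unfolding Fib_new[OF st] by (simp add: sum.reindex[OF inj])
    also have "\<dots> = (\<Sum>xs\<in>Fib ts'. wt xs * (a / (mu * real (G (ts' @ [(T, 0)])))))"
    proof (intro sum.cong refl)
      fix xs assume "xs \<in> Fib ts'"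
      then have "xs @ [T] \<in> Fib (ts' @ [(T, 0)])" unfolding Fib_new[OF st] by simp
      then show "wt (xs @ [T]) = wt xs * (a / (mu * real (G (ts' @ [(T, 0)]))))"
        using wt_snoc FF_fib by simp
    qed
    also have "\<dots> = tw ts' * (a / (mu * real (G (ts' @ [(T, 0)]))))"
      by (simp only: sum_distrib_right[symmetric] IH(2))
    also have "\<dots> = tw (ts' @ [(T, 0)])"
    proof -
      have z: "mu * real N * real (G (ts' @ [(T, 0)])) \<noteq> 0" using G_pos[OF st, of T 0] mu0 N_pos by simp
      have "tw (ts' @ [(T, 0)]) = tw ts' * (lam / (mu * real N * real (G (ts' @ [(T, 0)]))))"
        using aux_cancel[OF _ z, of "real (Suc ?l)" "tw ts'" lam] unfolding tw_snoc by simp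
      also have "\<dots> = tw ts' * (a / (mu * real (G (ts' @ [(T, 0)]))))"
        unfolding a_def using N_pos by (simp add: field_simps)
      finally show ?thesis by simp
    qed
    finally show ?case using IH Fib_new[OF st] by simp
  next
    case (Suc m)
    have st: "ts' @ [(T, m)] \<in> tok_states K d" by fact
    let ?A = "fst ` set (ts' @ [(T, m)])"
    have cA: "card ?A = Suc ?l"
      using st distinct_card[of "map fst (ts' @ [(T, m)])"] unfolding tok_states_iff by simp
    have fA: "finite ?A" by simp
    have inj: "inj_on (\<lambda>(xs, t). xs @ [t]) (Fib (ts' @ [(T, m)]) \<times> ?A)" by (auto simp: inj_on_def)
    have fin: "finite (Fib (ts' @ [(T, m)]))" using Suc.IH by simp
    have "sum wt (Fib (ts' @ [(T, Suc m)])) = (\<Sum>(xs, t)\<in>Fib (ts' @ [(T, m)]) \<times> ?A. wt (xs @ [t]))"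
      unfolding Fib_inc[OF st] using sum.reindex[OF inj, of wt] by (simp add: comp_def case_prod_unfold)
    also have "\<dots> = (\<Sum>xs\<in>Fib (ts' @ [(T, m)]). \<Sum>t\<in>?A. wt (xs @ [t]))"
      by (rule sum.cartesian_product[symmetric])
    also have "\<dots> = (\<Sum>xs\<in>Fib (ts' @ [(T, m)]). \<Sum>t\<in>?A. wt xs * (a / (mu * real (G (ts' @ [(T, 0)])))))"
    proof (intro sum.cong refl)
      fix xs t assume "xs \<in> Fib (ts' @ [(T, m)])" "t \<in> ?A"
      then have "xs @ [t] \<in> Fib (ts' @ [(T, Suc m)])" unfolding Fib_inc[OF st] by auto
      then show "wt (xs @ [t]) = wt xs * (a / (mu * real (G (ts' @ [(T, 0)]))))"
        using wt_snoc FF_fib Gm by simp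
    qed
    also have "\<dots> = (\<Sum>xs\<in>Fib (ts' @ [(T, m)]). wt xs * (real (Suc ?l) * (a / (mu * real (G (ts' @ [(T, 0)]))))))"
      using cA by (intro sum.cong refl) simp
    also have "\<dots> = tw (ts' @ [(T, m)]) * (real (Suc ?l) * (a / (mu * real (G (ts' @ [(T, 0)])))))"
      using Suc.IH by (simp only: sum_distrib_right[symmetric])
    also have "\<dots> = tw (ts' @ [(T, Suc m)])"
    proof -
      have "real (Suc ?l) * (a / (mu * real (G (ts' @ [(T, 0)])))) = real (Suc ?l) * lam / (mu * real N * real (G (ts' @ [(T, m)])))"
        unfolding a_def using Gm[of m] N_pos by (simp add: field_simps)
      then show ?thesis unfolding tw_snoc[of ts' T m] tw_snoc[of ts' T "Suc m"] Gm[of "Suc m"] Gm[of m]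
        by simp
    qed
    finally show ?case using fin Fib_inc[OF st] by simp
  qed
  then show ?case using p by simp
qed


lemma tw_nonneg: "ts \<in> tok_states K d \<Longrightarrow> 0 \<le> tw ts"
  using fib_sum[of ts] wt_pos unfolding Fib_def
  by (metis (no_types, lifting) mem_Collect_eq less_imp_le sum_nonneg)

lemma wt_summable:
  assumes sm: "tw summable_on tok_states K d"
  shows "wt summable_on S"
proof (rule nonneg_bdd_above_summable_on)
  show "\<And>x. x \<in> S \<Longrightarrow> 0 \<le> wt x" using wt_pos less_imp_le by blast
  show "bdd_above (sum wt ` {F. F \<subseteq> S \<and> finite F})"
  proof (rule bdd_aboveI2)
    fix F assume F: "F \<in> {F. F \<subseteq> S \<and> finite F}"
    then have FS: "F \<subseteq> S" and fF: "finite F" by auto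
    have "sum wt F = (\<Sum>ts\<in>tok ` F. sum wt {x\<in>F. tok x = ts})"
      by (rule sum.image_gen[OF fF])
    also have "\<dots> \<le> (\<Sum>ts\<in>tok ` F. sum wt (Fib ts))"
    proof (rule sum_mono)
      fix ts assume "ts \<in> tok ` F"
      then have "ts \<in> tok_states K d" using FS tok_in by auto
      then have "finite (Fib ts)" using fib_sum by blast
      moreover have "{x\<in>F. tok x = ts} \<subseteq> Fib ts" using FS unfolding Fib_def by auto
      ultimately show "sum wt {x\<in>F. tok x = ts} \<le> sum wt (Fib ts)"
        by (rule sum_mono2) (auto simp: Fib_def intro: less_imp_le wt_pos)
    qed
    also have "\<dots> = (\<Sum>ts\<in>tok ` F. tw ts)"
      using FS tok_in fib_sum by (intro sum.cong) auto
    also have "\<dots> \<le> infsum tw (tok_states K d)"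
      using FS tok_in tw_nonneg by (intro finite_sum_le_infsum[OF sm]) (auto simp: fF)
    finally show "sum wt F \<le> infsum tw (tok_states K d)" .
  qed
qed

lemma existence:
  assumes sm: "tw summable_on tok_states K d"
  shows "\<exists>p. stationary_dist S q p"
proof -
  let ?Z = "infsum wt S"
  have ws: "wt summable_on S" using wt_summable[OF sm] .
  have "sum wt {[]} \<le> ?Z"
    using wt_pos by (intro finite_sum_le_infsum[OF ws]) (auto simp: S_iff intro: less_imp_le)
  then have Z: "1 \<le> ?Z" by simp
  define p where "p = (\<lambda>x. (1 / ?Z) * wt x)"
  have "stationary_dist S q p"
    unfolding stationary_dist_def
  proof (intro conjI ballI)
    fix x assume "x \<in> S"
    show "0 \<le> p x" unfolding p_def using Z wt_pos[OF \<open>x \<in> S\<close>] by simp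
  next
    have "((\<lambda>x. (1 / ?Z) * wt x) has_sum ((1 / ?Z) * ?Z)) S"
      by (rule has_sum_cmult_right[OF has_sum_infsum[OF ws]])
    then show "(p has_sum 1) S" unfolding p_def using Z by simp
  next
    fix x assume x: "x \<in> S"
    have "(\<Sum>\<^sub>\<infinity>y\<in>S - {x}. p y * q y x) = (\<Sum>y\<in>Lle (Suc (length x)). p y * q y x)"
      by (rule infl_conv[OF x])
    also have "\<dots> = (1 / ?Z) * (\<Sum>y\<in>Lle (Suc (length x)). wt y * q y x)"
      unfolding p_def sum_distrib_left by (simp add: mult.assoc)
    also have "\<dots> = p x * (lam + mu * real (FF x))" unfolding wt_balance[OF x] p_def by simp
    finally show "p x * (\<Sum>\<^sub>\<infinity>y\<in>S - {x}. q x y) = (\<Sum>\<^sub>\<infinity>y\<in>S - {x}. p y * q y x)"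
      using qout[OF x] by simp
  qed
  then show ?thesis by blast
qed


lemma L_disj: "m \<noteq> m' \<Longrightarrow> L m \<inter> L m' = {}" unfolding L_def by auto

lemma Lle_Suc: "Lle (Suc n) = Lle n \<union> L (Suc n)" unfolding Lle_def L_def by auto

lemma Lle_L_disj: "Lle n \<inter> L (Suc n) = {}" unfolding Lle_def L_def by auto

lemma q_cons_pos:
  assumes "t # r \<in> S"
  shows "0 < q (t # r) r"
proof -
  have t: "t \<in> types" using assms S_iff by auto
  have "(if r = del_at 0 (t # r) then mu * real (nserving (t # r) 0) else 0) \<le> dep (t # r) r"
    unfolding dep_def by (rule member_le_sum) (use mu0 in auto)
  then have "mu * real (nserving (t # r) 0) \<le> dep (t # r) r" by (simp add: del_at_def)
  moreover have "nserving (t # r) 0 = d" unfolding nserving_def using type_props[OF t] by simp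
  then have "mu * real (nserving (t # r) 0) = mu * real d" by simp
  moreover have "0 < mu * real d" using mu0 d1 by simp
  ultimately show ?thesis using q_eq[of "t # r" r] arr_nonneg[of "t # r" r] by linarith
qed

lemma uniqueness:
  assumes sm: "tw summable_on tok_states K d"
  assumes st: "stationary_dist S q p"
  shows "\<forall>x\<in>S. p x = p [] * wt x"
proof -
  define c where "c = p []"
  define e where "e x = \<bar>p x - c * wt x\<bar>" for x
  define D where "D x = (\<Sum>y\<in>Lle (Suc (length x)). e y * q y x) - e x * (lam + mu * real (FF x))" for x
  have pnn: "\<And>x. x \<in> S \<Longrightarrow> 0 \<le> p x" and psum: "(p has_sum 1) S"
    and pbal: "\<And>x. x \<in> S \<Longrightarrow> p x * (\<Sum>\<^sub>\<infinity>y\<in>S - {x}. q x y) = (\<Sum>\<^sub>\<infinity>y\<in>S - {x}. p y * q y x)"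
    using st unfolding stationary_dist_def by auto
  have pbal': "p x * (lam + mu * real (FF x)) = (\<Sum>y\<in>Lle (Suc (length x)). p y * q y x)" if x: "x \<in> S" for x
    using pbal[OF x] qout[OF x] infl_conv[OF x] by simp
  have ebal: "(p x - c * wt x) * (lam + mu * real (FF x)) = (\<Sum>y\<in>Lle (Suc (length x)). (p y - c * wt y) * q y x)"
    if x: "x \<in> S" for x
  proof -
    have "(\<Sum>y\<in>Lle (Suc (length x)). (p y - c * wt y) * q y x) =
        (\<Sum>y\<in>Lle (Suc (length x)). p y * q y x) - c * (\<Sum>y\<in>Lle (Suc (length x)). wt y * q y x)"
      by (simp add: left_diff_distrib sum_subtractf sum_distrib_left mult.assoc)
    then show ?thesis using pbal'[OF x] wt_balance[OF x] by (simp add: algebra_simps)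
  qed
  have D_nn: "0 \<le> D x" if x: "x \<in> S" for x
  proof -
    have pos: "0 < lam + mu * real (FF x)" using lam0 mu0 by (simp add: add_pos_nonneg)
    have "e x * (lam + mu * real (FF x)) = \<bar>(p x - c * wt x) * (lam + mu * real (FF x))\<bar>"
      unfolding e_def using pos by (simp add: abs_mult)
    also have "\<dots> = \<bar>\<Sum>y\<in>Lle (Suc (length x)). (p y - c * wt y) * q y x\<bar>" using ebal[OF x] by simp
    also have "\<dots> \<le> (\<Sum>y\<in>Lle (Suc (length x)). \<bar>(p y - c * wt y) * q y x\<bar>)" by (rule sum_abs)
    also have "\<dots> = (\<Sum>y\<in>Lle (Suc (length x)). e y * q y x)"
      unfolding e_def using q_nonneg by (intro sum.cong refl) (simp add: abs_mult)
    finally show ?thesis unfolding D_def by simp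
  qed
  have e_nn: "\<And>x. 0 \<le> e x" unfolding e_def by simp
  have Kpos: "0 < real K" using d1 dK by simp
  have Dsum: "(\<Sum>x\<in>Lle n. D x) \<le> mu * real K * (\<Sum>y\<in>L (Suc n). e y)" for n
  proof -
    let ?R = "\<lambda>y. \<Sum>x\<in>Lle n. q y x"
    have "(\<Sum>x\<in>Lle n. \<Sum>y\<in>Lle (Suc (length x)). e y * q y x) = (\<Sum>x\<in>Lle n. \<Sum>y\<in>Lle (Suc n). e y * q y x)"
      by (intro sum.cong refl infl_mono[symmetric]) (auto simp: Lle_def)
    also have "\<dots> = (\<Sum>y\<in>Lle (Suc n). e y * ?R y)"
      by (subst sum.swap) (simp add: sum_distrib_left)
    also have "\<dots> = (\<Sum>y\<in>Lle n. e y * ?R y) + (\<Sum>y\<in>L (Suc n). e y * ?R y)"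
      unfolding Lle_Suc by (rule sum.union_disjoint[OF finite_Lle finite_L Lle_L_disj])
    also have "(\<Sum>y\<in>Lle n. e y * ?R y) \<le> (\<Sum>y\<in>Lle n. e y * (lam + mu * real (FF y)))"
    proof (rule sum_mono)
      fix y assume y: "y \<in> Lle n"
      then have "y \<in> S" using Lle_sub_S by auto
      then have "?R y \<le> lam + mu * real (FF y)" using q_out_le[of y n] lam0 mu0 by auto
      then show "e y * ?R y \<le> e y * (lam + mu * real (FF y))" using e_nn by (simp add: mult_left_mono)
    qed
    also have "(\<Sum>y\<in>L (Suc n). e y * ?R y) \<le> (\<Sum>y\<in>L (Suc n). e y * (mu * real K))"
    proof (rule sum_mono)
      fix y assume y: "y \<in> L (Suc n)"
      then have yS: "y \<in> S" using L_sub_Lle Lle_sub_S by blast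
      have "length y = Suc n" using y unfolding L_def by simp
      then have "?R y = mu * real (FF y)" using q_out_le[OF yS, of n] by simp
      also have "\<dots> \<le> mu * real K" using FF_le[OF yS] mu0 by simp
      finally show "e y * ?R y \<le> e y * (mu * real K)" using e_nn by (simp add: mult_left_mono)
    qed
    finally have "(\<Sum>x\<in>Lle n. \<Sum>y\<in>Lle (Suc (length x)). e y * q y x)
        \<le> (\<Sum>y\<in>Lle n. e y * (lam + mu * real (FF y))) + mu * real K * (\<Sum>y\<in>L (Suc n). e y)"
      by (simp add: sum_distrib_left sum_distrib_right mult.commute)
    then show ?thesis unfolding D_def by (simp add: sum_subtractf)
  qed
  have es: "e summable_on S"
  proof -
    have ps: "p summable_on S" using psum summable_on_def by blast
    have gs: "(\<lambda>x. p x + \<bar>c\<bar> * wt x) summable_on S"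
      using ps summable_on_cmult_right[OF wt_summable[OF sm]] by (rule summable_on_add)
    have "(\<lambda>x. norm (p x - c * wt x)) summable_on S"
    proof (rule Infinite_Sum.abs_summable_on_comparison_test'[OF gs])
      fix x assume x: "x \<in> S"
      have "\<bar>p x - c * wt x\<bar> \<le> \<bar>p x\<bar> + \<bar>c * wt x\<bar>" by (rule abs_triangle_ineq4)
      also have "\<dots> = p x + \<bar>c\<bar> * wt x" using pnn[OF x] wt_pos[OF x] by (simp add: abs_mult)
      finally show "norm (p x - c * wt x) \<le> p x + \<bar>c\<bar> * wt x" by simp
    qed
    then show ?thesis unfolding e_def real_norm_def .
  qed
  have Dz: "D x0 = 0" if x0: "x0 \<in> S" for x0
  proof (rule ccontr)
    assume "D x0 \<noteq> 0"
    then have dpos: "0 < D x0" using D_nn[OF x0] by simp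
    define \<delta> where "\<delta> = D x0 / (mu * real K)"
    have dlt: "0 < \<delta>" unfolding \<delta>_def using dpos mu0 Kpos by simp
    let ?Et = "infsum e S"
    have bound: "\<delta> \<le> (\<Sum>y\<in>L (Suc m). e y)" if m: "length x0 \<le> m" for m
    proof -
      have "x0 \<in> Lle m" using x0 m by (auto simp: Lle_def S_iff)
      then have "D x0 \<le> (\<Sum>x\<in>Lle m. D x)"
        using D_nn Lle_sub_S by (intro member_le_sum finite_Lle) auto
      also have "\<dots> \<le> mu * real K * (\<Sum>y\<in>L (Suc m). e y)" by (rule Dsum)
      finally show ?thesis unfolding \<delta>_def using mu0 Kpos by (simp add: field_simps)
    qed
    obtain M :: nat where M: "?Et / \<delta> < real M" using reals_Archimedean2 by blast
    let ?I = "{length x0..<length x0 + M}"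
    have "real M * \<delta> = (\<Sum>m\<in>?I. \<delta>)" by simp
    also have "\<dots> \<le> (\<Sum>m\<in>?I. \<Sum>y\<in>L (Suc m). e y)"
      by (rule sum_mono) (rule bound, simp)
    also have "\<dots> = sum e (\<Union>m\<in>?I. L (Suc m))"
    proof (rule sum.UNION_disjoint[symmetric])
      show "finite ?I" by simp
      show "\<forall>m\<in>?I. finite (L (Suc m))" using finite_L by blast
      show "\<forall>i\<in>?I. \<forall>j\<in>?I. i \<noteq> j \<longrightarrow> L (Suc i) \<inter> L (Suc j) = {}" using L_disj by simp
    qed
    also have "\<dots> \<le> ?Et"
    proof (rule finite_sum_le_infsum[OF es])
      show "finite (\<Union>m\<in>?I. L (Suc m))" using finite_L by auto
      show "(\<Union>m\<in>?I. L (Suc m)) \<subseteq> S" using L_sub_Lle Lle_sub_S by blast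
    qed (rule e_nn)
    finally have "real M * \<delta> \<le> ?Et" .
    then show False using M dlt by (simp add: field_simps)
  qed
  have ez: "x \<in> S \<Longrightarrow> e x = 0" for x
  proof (induction x)
    case Nil then show ?case unfolding e_def c_def by simp
  next
    case (Cons t r)
    then have rS: "r \<in> S" by (simp add: S_iff)
    have er: "e r = 0" using Cons.IH[OF rS] .
    have "(\<Sum>y\<in>Lle (Suc (length r)). e y * q y r) = 0" using Dz[OF rS] er unfolding D_def by simp
    moreover have "\<forall>y\<in>Lle (Suc (length r)). 0 \<le> e y * q y r" using e_nn q_nonneg by simp
    ultimately have "\<forall>y\<in>Lle (Suc (length r)). e y * q y r = 0"
      using sum_nonneg_eq_0_iff[OF finite_Lle[of "Suc (length r)"], of "\<lambda>y. e y * q y r"] by simp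
    moreover have "t # r \<in> Lle (Suc (length r))" using Cons.prems by (auto simp: Lle_def S_iff)
    ultimately have "e (t # r) * q (t # r) r = 0" by (rule bspec)
    moreover have "q (t # r) r \<noteq> 0" using q_cons_pos[OF Cons.prems] by linarith
    ultimately show ?case by (metis mult_eq_0_iff)
  qed
  show ?thesis
  proof
    fix x assume "x \<in> S"
    then have "\<bar>p x - c * wt x\<bar> = 0" using ez e_def by metis
    then show "p x = p [] * wt x" unfolding c_def by simp
  qed
qed

end

theorem mainTheorem10:
  fixes K d :: nat and lam mu :: real
  assumes "1 \<le> d" and "d \<le> K" and "0 < lam" and "0 < mu"
    and "tok_weight K d lam mu summable_on tok_states K d"
  shows "(\<exists>p. stationary_dist (cstates K d) (coc_rate K d lam mu) p) \<and>
         (\<forall>p. stationary_dist (cstates K d) (coc_rate K d lam mu) p \<longrightarrow>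
            (\<forall>ts\<in>tok_states K d.
               tok_marg K d p ts = tok_marg K d p [] * tok_weight K d lam mu ts))"
proof -
  interpret coc K d lam mu using assms(1-4) by unfold_locales
  have ex: "\<exists>p. stationary_dist (cstates K d) (coc_rate K d lam mu) p"
    using existence[OF assms(5)] .
  have un: "\<forall>p. stationary_dist (cstates K d) (coc_rate K d lam mu) p \<longrightarrow>
            (\<forall>ts\<in>tok_states K d.
               tok_marg K d p ts = tok_marg K d p [] * tok_weight K d lam mu ts)"
  proof (intro allI impI ballI)
    fix p ts
    assume st: "stationary_dist (cstates K d) (coc_rate K d lam mu) p"
      and ts: "ts \<in> tok_states K d"
    have pe: "\<forall>x\<in>cstates K d. p x = p [] * wt x" using uniqueness[OF assms(5) st] .
    have fin: "finite (Fib ts)" and sw: "sum wt (Fib ts) = tok_weight K d lam mu ts"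
      using fib_sum[OF ts] by auto
    have "tok_marg K d p ts = infsum p (Fib ts)" unfolding tok_marg_def Fib_def ..
    also have "\<dots> = sum p (Fib ts)" using fin by simp
    also have "\<dots> = sum (\<lambda>x. p [] * wt x) (Fib ts)"
      using pe by (intro sum.cong refl) (auto simp: Fib_def)
    also have "\<dots> = p [] * tok_weight K d lam mu ts" by (simp add: sum_distrib_left[symmetric] sw)
    finally have A: "tok_marg K d p ts = p [] * tok_weight K d lam mu ts" .
    have "tok_marg K d p [] = infsum p (Fib [])" unfolding tok_marg_def Fib_def ..
    also have "\<dots> = p []" unfolding Fib_Nil by simp
    finally show "tok_marg K d p ts = tok_marg K d p [] * tok_weight K d lam mu ts" using A by simp
  qed
  show ?thesis using ex un by blast
qed

end
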